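(* Assume the Setting below together with (A-sub), (A-outer), (A-sing). Let $\hat{\mathcal P}$ be any affine subspace of $\mathbb R^d$. Then for every $h\in\mathcal H$, $$\|\Pi_{\hat{\mathcal P}}(g_h)-\mathbb Eg_h\|_2^2\le2\|g_h-\mathbb Eg_h\|_2^2+4\Big(\frac1{n-2f}+\frac{4\delta^2}{\sigma^2}\Big)\Big(\ell_t(\hat{\mathcal P})+\sum_{i\in\mathcal H}\|g_i-\mathbb Eg_i\|_2^2\Big).$$ Consequently, if $\mathbb E\|g_i-\mathbb Eg_i\|_2^2\le\epsilon^2$ for all $i\in\mathcal H$, then $\mathbb E\|\Pi_{\hat{\mathcal P}}(g_h)-\mathbb Eg_h\|_2^2\le2\epsilon^2+4\big(\frac1{n-2f}+\frac{4\delta^2}{\sigma^2}\big)\big(\mathbb E\ell_t(\hat{\mathcal P})+|\mathcal H|\epsilon^2\big)$.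
   Context: Setting: let $n,f,c,d$ be positive integers with $c\ge2$, $d\ge c$, $n-2f\ge1$. The index set $\{1,\dots,n\}$ is partitioned as $\mathcal H\sqcup\mathcal B$ (honest and Byzantine clients) with $|\mathcal B|\le f$. Each client $i$ has a vector $g_i\in\mathbb R^d$; for $i\in\mathcal H$, $\mathbb Eg_i\in\mathbb R^d$ denotes a fixed vector (the expectation of $g_i$), and $\mathbb E\mu=\frac1{|\mathcal H|}\sum_{i\in\mathcal H}\mathbb Eg_i$. A $k$-dimensional affine subspace is $\mathcal P=\{U\lambda+m:\lambda\in\mathbb R^k\}$ with $U\in\mathbb R^{d\times k}$ having orthonormal columns and $m\in\mathbb R^d$; its orthogonal projection is $\Pi_{\mathcal P}(w)=UU^\top(w-m)+m$. The trimmed reconstruction loss of an affine subspace $\mathcal P$ is $\ell_t(\mathcal P)=\min_{S\subseteq\{1,\dots,n\},\,|S|=n-f}\sum_{i\in S}\|g_i-\Pi_{\mathcal P}(g_i)\|_2^2$. Assumptions: (A-sub) there is a $(c-1)$-dimensional affine subspace $\mathcal P^*$ containing $\mathbb Eg_i$ for all $i\in\mathcal H$; (A-outer) $\|\mathbb Eg_i-\mathbb E\mu\|_2\le\delta$ for all $i\in\mathcal H$; (A-sing) for every $S\subseteq\mathcal H$ with $|S|=n-2f$, the $d\times(n-2f)$ matrix with columns $\mathbb Eg_s-\frac1{n-2f}\sum_{s'\in S}\mathbb Eg_{s'}$ ($s\in S$) has $(c-1)$-th largest singular value at least $\sigma>0$. *)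

theory Defs
  imports "HOL-Probability.Probability" "HOL-Library.Multiset" "Jordan_Normal_Form.Char_Poly"
begin

definition sqnorm :: "real vec \<Rightarrow> real" where
  "sqnorm v = v \<bullet> v"

definition orthonormal_cols :: "nat \<Rightarrow> nat \<Rightarrow> real mat \<Rightarrow> bool" where
  "orthonormal_cols d k U \<longleftrightarrow> U \<in> carrier_mat d k \<and> transpose_mat U * U = 1\<^sub>m k"

definition aff_set :: "real mat \<Rightarrow> real vec \<Rightarrow> real vec set" where
  "aff_set U m = {U *\<^sub>v lam + m | lam. lam \<in> carrier_vec (dim_col U)}"

definition proj_aff :: "real mat \<Rightarrow> real vec \<Rightarrow> real vec \<Rightarrow> real vec" where
  "proj_aff U m w = U *\<^sub>v (transpose_mat U *\<^sub>v (w - m)) + m"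

definition trimmed_loss :: "nat \<Rightarrow> nat \<Rightarrow> (nat \<Rightarrow> real vec) \<Rightarrow> real mat \<Rightarrow> real vec \<Rightarrow> real" where
  "trimmed_loss n f g U m =
     Min {(\<Sum>i\<in>S. sqnorm (g i - proj_aff U m (g i))) | S. S \<subseteq> {1..n} \<and> card S = n - f}"

definition vmean :: "nat \<Rightarrow> nat set \<Rightarrow> (nat \<Rightarrow> real vec) \<Rightarrow> real vec" where
  "vmean d A v = vec d (\<lambda>j. (\<Sum>i\<in>A. v i $ j) / real (card A))"

(* eigenvalues of a square real matrix (real roots of the characteristic polynomial,
   counted with algebraic multiplicity), listed in non-increasing order *)
definition eigenvalues_desc :: "real mat \<Rightarrow> real list" where
  "eigenvalues_desc M = rev (sorted_list_of_multiset (Abs_multiset (\<lambda>x. order x (char_poly M))))"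

(* k-th largest singular value (k >= 1) of a real matrix A: square root of the k-th largest
   eigenvalue of A^T A; by the usual convention it is 0 if k exceeds the number of them *)
definition kth_singular_value :: "real mat \<Rightarrow> nat \<Rightarrow> real" where
  "kth_singular_value A k =
     (let L = eigenvalues_desc (transpose_mat A * A)
      in if 1 \<le> k \<and> k \<le> length L then sqrt (L ! (k - 1)) else 0)"

definition centered_matrix :: "nat \<Rightarrow> nat set \<Rightarrow> (nat \<Rightarrow> real vec) \<Rightarrow> real mat" where
  "centered_matrix d S v = mat_of_cols d (map (\<lambda>s. v s - vmean d S v) (sorted_list_of_set S))"

end

theory Submission
  imports Defs
begin

unbundle no inner_syntax
unbundle no vec_syntax



lemma sym_form:
  fixes N :: "real mat"
  assumes N: "N \<in> carrier_mat r r" and sym: "transpose_mat N = N"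
    and x: "x \<in> carrier_vec r" and y: "y \<in> carrier_vec r"
  shows "y \<bullet> (N *\<^sub>v x) = x \<bullet> (N *\<^sub>v y)"
proof -
  have "y \<bullet> (N *\<^sub>v x) = (transpose_mat N *\<^sub>v y) \<bullet> x"
    using transpose_vec_mult_scalar[OF N x y] by simp
  also have "\<dots> = x \<bullet> (N *\<^sub>v y)" using sym N x y
    by (subst comm_scalar_prod[of _ r]) auto
  finally show ?thesis .
qed

lemma quad_expand:
  fixes N :: "real mat"
  assumes N: "N \<in> carrier_mat r r" and sym: "transpose_mat N = N"
    and x: "x \<in> carrier_vec r" and y: "y \<in> carrier_vec r"
  shows "(y + a \<cdot>\<^sub>v x) \<bullet> (N *\<^sub>v (y + a \<cdot>\<^sub>v x))
     = y \<bullet> (N *\<^sub>v y) + 2 * a * (y \<bullet> (N *\<^sub>v x)) + a\<^sup>2 * (x \<bullet> (N *\<^sub>v x))"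
proof -
  have s: "x \<bullet> (N *\<^sub>v y) = y \<bullet> (N *\<^sub>v x)" using sym_form[OF N sym x y] by simp
  have "N *\<^sub>v (y + a \<cdot>\<^sub>v x) = N *\<^sub>v y + a \<cdot>\<^sub>v (N *\<^sub>v x)"
    using N x y by (simp add: mult_add_distrib_mat_vec[OF N] mult_mat_vec[OF N])
  hence "(y + a \<cdot>\<^sub>v x) \<bullet> (N *\<^sub>v (y + a \<cdot>\<^sub>v x))
     = (y + a \<cdot>\<^sub>v x) \<bullet> (N *\<^sub>v y + a \<cdot>\<^sub>v (N *\<^sub>v x))" by simp
  also have "\<dots> = y \<bullet> (N *\<^sub>v y) + a * (y \<bullet> (N *\<^sub>v x)) + a * (x \<bullet> (N *\<^sub>v y)) + a * a * (x \<bullet> (N *\<^sub>v x))"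
    using N x y
    by (simp add: add_scalar_prod_distrib[of _ r] scalar_prod_add_distrib[of _ r] algebra_simps)
  finally show ?thesis using s by (simp add: power2_eq_square algebra_simps)
qed

lemma psd_cs:
  fixes N :: "real mat"
  assumes N: "N \<in> carrier_mat r r" and sym: "transpose_mat N = N"
    and psd: "\<And>u. u \<in> carrier_vec r \<Longrightarrow> 0 \<le> u \<bullet> (N *\<^sub>v u)"
    and x: "x \<in> carrier_vec r" and y: "y \<in> carrier_vec r"
  shows "(y \<bullet> (N *\<^sub>v x))\<^sup>2 \<le> (y \<bullet> (N *\<^sub>v y)) * (x \<bullet> (N *\<^sub>v x))"
proof -
  define a where "a = x \<bullet> (N *\<^sub>v x)"
  define b where "b = y \<bullet> (N *\<^sub>v x)"
  define c where "c = y \<bullet> (N *\<^sub>v y)"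
  have q: "0 \<le> c + 2 * t * b + t\<^sup>2 * a" for t
    using psd[of "y + t \<cdot>\<^sub>v x"] quad_expand[OF N sym x y, of t] x y
    unfolding a_def b_def c_def by auto
  have a0: "0 \<le> a" using psd[OF x] unfolding a_def .
  show ?thesis
  proof (cases "a = 0")
    case True
    have "b = 0"
    proof (rule ccontr)
      assume b: "b \<noteq> 0"
      have "0 \<le> c + 2 * (- (c + 1) / (2 * b)) * b" using q[of "- (c + 1) / (2 * b)"] True by simp
      also have "\<dots> = -1" using b by (simp add: field_simps)
      finally show False by simp
    qed
    thus ?thesis unfolding a_def[symmetric] b_def[symmetric] c_def[symmetric] using True by simp
  next
    case False
    hence ap: "0 < a" using a0 by simp
    have "0 \<le> c + 2 * (- b / a) * b + (- b / a)\<^sup>2 * a" using q .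
    also have "\<dots> = c - b\<^sup>2 / a" using ap by (simp add: field_simps power2_eq_square)
    finally have "b\<^sup>2 \<le> c * a" using ap by (simp add: field_simps)
    thus ?thesis unfolding a_def[symmetric] b_def[symmetric] c_def[symmetric] .
  qed
qed

lemma cauchy_schwarz_vec:
  fixes x y :: "real vec"
  assumes x: "x \<in> carrier_vec r" and y: "y \<in> carrier_vec r"
  shows "(y \<bullet> x)\<^sup>2 \<le> (y \<bullet> y) * (x \<bullet> x)"
proof -
  have "(y \<bullet> (1\<^sub>m r *\<^sub>v x))\<^sup>2 \<le> (y \<bullet> (1\<^sub>m r *\<^sub>v y)) * (x \<bullet> (1\<^sub>m r *\<^sub>v x))"
    by (rule psd_cs[OF one_carrier_mat _ _ x y]) (auto simp: scalar_prod_def intro: sum_nonneg)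
  thus ?thesis using x y by simp
qed

lemma sqnorm_nonneg: "0 \<le> (x :: real vec) \<bullet> x"
  by (auto simp: scalar_prod_def intro: sum_nonneg)

lemma sqnorm_zero: assumes "x \<in> carrier_vec r" "(x :: real vec) \<bullet> x = 0" shows "x = 0\<^sub>v r"
proof -
  have "\<forall>i\<in>{0..<r}. x $ i * x $ i = 0"
    using assms by (subst sum_nonneg_eq_0_iff[symmetric]) (auto simp: scalar_prod_def)
  thus ?thesis using assms by (intro eq_vecI) auto
qed

lemma quad_bound:
  fixes B :: "real mat"
  assumes B: "B \<in> carrier_mat r r" and x: "x \<in> carrier_vec r"
  shows "\<bar>x \<bullet> (B *\<^sub>v x)\<bar> \<le> (\<Sum>i<r. \<Sum>j<r. \<bar>B $$ (i,j)\<bar>) * (x \<bullet> x)"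
proof -
  have xx: "x \<bullet> x = (\<Sum>k<r. x $ k * x $ k)" using x by (simp add: scalar_prod_def lessThan_atLeast0)
  have e: "x \<bullet> (B *\<^sub>v x) = (\<Sum>i<r. \<Sum>j<r. x $ i * B $$ (i,j) * x $ j)"
    using B x by (simp add: scalar_prod_def lessThan_atLeast0 sum_distrib_left row_def mult.assoc)
  have sq: "x $ k * x $ k \<le> x \<bullet> x" if k: "k < r" for k
    unfolding xx by (rule member_le_sum[of k "{..<r}" "\<lambda>k. x $ k * x $ k"]) (use k in auto)
  have pij: "\<bar>x $ i * x $ j\<bar> \<le> x \<bullet> x" if i: "i < r" and j: "j < r" for i j
  proof (cases "\<bar>x $ i\<bar> \<le> \<bar>x $ j\<bar>")
    case True
    have "\<bar>x $ i * x $ j\<bar> \<le> \<bar>x $ j\<bar> * \<bar>x $ j\<bar>" unfolding abs_mult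
      by (rule mult_right_mono[OF True]) simp
    also have "\<dots> = x $ j * x $ j" by (simp add: abs_mult_self_eq)
    finally show ?thesis using sq[OF j] by linarith
  next
    case False
    have "\<bar>x $ i * x $ j\<bar> \<le> \<bar>x $ i\<bar> * \<bar>x $ i\<bar>" unfolding abs_mult
      by (rule mult_left_mono) (use False in auto)
    also have "\<dots> = x $ i * x $ i" by (simp add: abs_mult_self_eq)
    finally show ?thesis using sq[OF i] by linarith
  qed
  have "\<bar>x \<bullet> (B *\<^sub>v x)\<bar> \<le> (\<Sum>i<r. \<Sum>j<r. \<bar>x $ i * B $$ (i,j) * x $ j\<bar>)"
    unfolding e by (rule order.trans[OF sum_abs]) (intro sum_mono sum_abs)
  also have "\<dots> \<le> (\<Sum>i<r. \<Sum>j<r. \<bar>B $$ (i,j)\<bar> * (x \<bullet> x))"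
  proof (intro sum_mono)
    fix i j assume i: "i \<in> {..<r}" and j: "j \<in> {..<r}"
    have "\<bar>x $ i * B $$ (i,j) * x $ j\<bar> = \<bar>B $$ (i,j)\<bar> * \<bar>x $ i * x $ j\<bar>" by (simp add: abs_mult)
    also have "\<dots> \<le> \<bar>B $$ (i,j)\<bar> * (x \<bullet> x)" by (rule mult_left_mono[OF pij]) (use i j in auto)
    finally show "\<bar>x $ i * B $$ (i,j) * x $ j\<bar> \<le> \<bar>B $$ (i,j)\<bar> * (x \<bullet> x)" .
  qed
  also have "\<dots> = (\<Sum>i<r. \<Sum>j<r. \<bar>B $$ (i,j)\<bar>) * (x \<bullet> x)" by (simp add: sum_distrib_right)
  finally show ?thesis .
qed



lemma sym_root_below:
  fixes S :: "real mat"
  assumes S: "S \<in> carrier_mat r r" and sym: "transpose_mat S = S"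
    and q: "q \<in> carrier_vec r" and lt: "q \<bullet> (S *\<^sub>v q) < s * (q \<bullet> q)"
  shows "\<exists>t<s. poly (char_poly S) t = 0"
proof -
  define F where "F = {t::real. \<forall>x\<in>carrier_vec r. t * (x \<bullet> x) \<le> x \<bullet> (S *\<^sub>v x)}"
  define K where "K = (\<Sum>i<r. \<Sum>j<r. \<bar>S $$ (i,j)\<bar>)"
  have "- K \<in> F" unfolding F_def K_def
  proof safe
    fix x :: "real vec" assume x: "x \<in> carrier_vec r"
    from quad_bound[OF S x] show "- (\<Sum>i<r. \<Sum>j<r. \<bar>S $$ (i,j)\<bar>) * (x \<bullet> x) \<le> x \<bullet> (S *\<^sub>v x)" by linarith
  qed
  hence Fne: "F \<noteq> {}" by auto
  have qq: "0 < q \<bullet> q"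
  proof (rule ccontr)
    assume "\<not> 0 < q \<bullet> q"
    hence "q \<bullet> q = 0" using sqnorm_nonneg[of q] by linarith
    hence "q = 0\<^sub>v r" using sqnorm_zero[OF q] by simp
    thus False using lt S by simp
  qed
  define v0 where "v0 = (q \<bullet> (S *\<^sub>v q)) / (q \<bullet> q)"
  have v0s: "v0 < s" unfolding v0_def using lt qq by (simp add: divide_less_eq)
  have Fle: "t \<le> (x \<bullet> (S *\<^sub>v x)) / (x \<bullet> x)" if "t \<in> F" "x \<in> carrier_vec r" "0 < x \<bullet> x" for t x
    using that unfolding F_def by (simp add: le_divide_eq)
  have bdd: "bdd_above F" using Fle[OF _ q qq] unfolding bdd_above_def by blast
  define ts where "ts = Sup F"
  have ts_le: "ts \<le> (x \<bullet> (S *\<^sub>v x)) / (x \<bullet> x)" if "x \<in> carrier_vec r" "0 < x \<bullet> x" for x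
    unfolding ts_def by (rule cSup_least[OF Fne]) (use Fle that in auto)
  have tsF: "ts \<in> F" unfolding F_def
  proof safe
    fix x :: "real vec" assume x: "x \<in> carrier_vec r"
    show "ts * (x \<bullet> x) \<le> x \<bullet> (S *\<^sub>v x)"
    proof (cases "x \<bullet> x = 0")
      case True
      hence "x = 0\<^sub>v r" using sqnorm_zero[OF x] by simp
      thus ?thesis using S by simp
    next
      case False
      hence "0 < x \<bullet> x" using sqnorm_nonneg[of x] by linarith
      thus ?thesis using ts_le[OF x] by (simp add: le_divide_eq)
    qed
  qed
  have tss: "ts < s" using ts_le[OF q qq] v0s unfolding v0_def by linarith
  define N where "N = S - ts \<cdot>\<^sub>m 1\<^sub>m r"
  have N: "N \<in> carrier_mat r r" unfolding N_def using S by auto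
  have Ssym: "S $$ (j,i) = S $$ (i,j)" if "i < r" "j < r" for i j
  proof -
    have "transpose_mat S $$ (i,j) = S $$ (j,i)" using S that by simp
    thus ?thesis using sym by simp
  qed
  have Nsym: "transpose_mat N = N" unfolding N_def using S Ssym
    by (intro eq_matI) auto
  have Nx: "x \<bullet> (N *\<^sub>v x) = x \<bullet> (S *\<^sub>v x) - ts * (x \<bullet> x)" if x: "x \<in> carrier_vec r" for x
  proof -
    have sm: "(ts \<cdot>\<^sub>m 1\<^sub>m r) *\<^sub>v x = ts \<cdot>\<^sub>v x" using x
      by (intro eq_vecI) (auto simp: scalar_prod_def if_distrib if_distribR cong: if_cong)
    have "N *\<^sub>v x = S *\<^sub>v x - ts \<cdot>\<^sub>v x" unfolding N_def using S x
      by (simp add: add_mult_distrib_mat_vec minus_mult_distrib_mat_vec sm)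
    thus ?thesis using S x by (simp add: scalar_prod_minus_distrib[of _ r])
  qed
  have psd: "0 \<le> u \<bullet> (N *\<^sub>v u)" if "u \<in> carrier_vec r" for u
    using tsF that Nx unfolding F_def by auto
  have detN: "Determinant.det N = 0"
  proof (rule ccontr)
    assume dN: "Determinant.det N \<noteq> 0"
    from det_non_zero_imp_unit[OF N dN, of "()"]
    obtain B where B: "B \<in> carrier_mat r r" and NB: "N * B = 1\<^sub>m r"
      unfolding Units_def ring_mat_def by auto
    define KB where "KB = (\<Sum>i<r. \<Sum>j<r. \<bar>B $$ (i,j)\<bar>) + 1"
    have KB0: "0 < KB" unfolding KB_def by (simp add: add_nonneg_pos sum_nonneg)
    have "ts + 1 / KB \<in> F" unfolding F_def
    proof safe
      fix x :: "real vec" assume x: "x \<in> carrier_vec r"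
      define y where "y = B *\<^sub>v x"
      have y: "y \<in> carrier_vec r" unfolding y_def using B x by auto
      have Ny: "N *\<^sub>v y = x" unfolding y_def using NB B N x
        by (metis assoc_mult_mat_vec one_mult_mat_vec)
      have "x \<bullet> x = y \<bullet> (N *\<^sub>v x)"
        using sym_form[OF N Nsym y x] Ny x by (simp add: comm_scalar_prod[of _ r])
      hence "(x \<bullet> x)\<^sup>2 \<le> (y \<bullet> (N *\<^sub>v y)) * (x \<bullet> (N *\<^sub>v x))"
        using psd_cs[OF N Nsym psd x y] by simp
      also have "y \<bullet> (N *\<^sub>v y) = x \<bullet> (B *\<^sub>v x)"
      proof -
        have "y \<bullet> (N *\<^sub>v y) = y \<bullet> x" by (simp add: Ny)
        also have "\<dots> = x \<bullet> y" using x y by (simp add: comm_scalar_prod[of _ r])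
        finally show ?thesis unfolding y_def .
      qed
      also have "\<dots> \<le> KB * (x \<bullet> x)"
      proof -
        have "x \<bullet> (B *\<^sub>v x) \<le> (\<Sum>i<r. \<Sum>j<r. \<bar>B $$ (i,j)\<bar>) * (x \<bullet> x)"
          using quad_bound[OF B x] by linarith
        thus ?thesis unfolding KB_def using sqnorm_nonneg[of x] by (simp add: distrib_right)
      qed
      finally have ineq: "(x \<bullet> x)\<^sup>2 \<le> KB * (x \<bullet> x) * (x \<bullet> (N *\<^sub>v x))"
        using psd[OF x] by (meson mult_right_mono order_trans)
      have main: "x \<bullet> x \<le> KB * (x \<bullet> (N *\<^sub>v x))"
      proof (cases "x \<bullet> x = 0")
        case True thus ?thesis using psd[OF x] KB0 by simp
      next
        case False
        hence p: "0 < x \<bullet> x" using sqnorm_nonneg[of x] by linarith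
        from ineq have "(x \<bullet> x) * (x \<bullet> x) \<le> (x \<bullet> x) * (KB * (x \<bullet> (N *\<^sub>v x)))"
          by (simp add: power2_eq_square mult_ac)
        thus ?thesis using p by simp
      qed
      have "(ts + 1 / KB) * (x \<bullet> x) = ts * (x \<bullet> x) + (x \<bullet> x) / KB" by (simp add: field_simps)
      also have "\<dots> \<le> ts * (x \<bullet> x) + x \<bullet> (N *\<^sub>v x)" using main KB0 by (simp add: divide_le_eq mult.commute)
      also have "\<dots> = x \<bullet> (S *\<^sub>v x)" using Nx[OF x] by simp
      finally show "(ts + 1 / KB) * (x \<bullet> x) \<le> x \<bullet> (S *\<^sub>v x)" .
    qed
    hence "ts + 1 / KB \<le> ts" unfolding ts_def by (rule cSup_upper[OF _ bdd])
    thus False using KB0 by simp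
  qed
  have "char_matrix S ts = N" unfolding char_matrix_def N_def using S
    by (intro eq_matI) auto
  hence "eigenvalue S ts" using eigenvalue_det[OF S] detN by simp
  hence "poly (char_poly S) ts = 0" using eigenvalue_root_char_poly[OF S] by simp
  thus ?thesis using tss by blast
qed



lemma poly_char_poly_eval:
  fixes A :: "real mat"
  assumes A: "A \<in> carrier_mat n n"
  shows "poly (char_poly A) x = Determinant.det (x \<cdot>\<^sub>m 1\<^sub>m n - A)"
proof -
  have "- char_matrix A x = x \<cdot>\<^sub>m 1\<^sub>m n - A"
    using A unfolding char_matrix_def by (intro eq_matI) auto
  thus ?thesis using char_poly_matrix[OF A] by simp
qed

lemma sylvester_det:
  fixes Z :: "real mat"
  assumes Z: "Z \<in> carrier_mat r m"
  shows "x ^ r * Determinant.det (x \<cdot>\<^sub>m 1\<^sub>m m - transpose_mat Z * Z)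
       = x ^ m * Determinant.det (x \<cdot>\<^sub>m 1\<^sub>m r - Z * transpose_mat Z)"
proof -
  have ZT: "transpose_mat Z \<in> carrier_mat m r" using Z by auto
  define K where "K = four_block_mat (x \<cdot>\<^sub>m 1\<^sub>m r) Z (transpose_mat Z) (1\<^sub>m m)"
  define L1 where "L1 = four_block_mat (1\<^sub>m r) (- Z) (0\<^sub>m m r) (x \<cdot>\<^sub>m 1\<^sub>m m)"
  define L2 where "L2 = four_block_mat (1\<^sub>m r) (0\<^sub>m r m) (- transpose_mat Z) (x \<cdot>\<^sub>m 1\<^sub>m m)"
  have K: "K \<in> carrier_mat (r+m) (r+m)" unfolding K_def using Z ZT by auto
  have L1: "L1 \<in> carrier_mat (r+m) (r+m)" unfolding L1_def using Z ZT by auto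
  have L2: "L2 \<in> carrier_mat (r+m) (r+m)" unfolding L2_def using Z ZT by auto
  have dL1: "Determinant.det L1 = x ^ m"
    unfolding L1_def by (subst det_four_block_mat_lower_left_zero[of _ r _ m]) (use Z in auto)
  have dL2: "Determinant.det L2 = x ^ m"
    unfolding L2_def by (subst det_four_block_mat_upper_right_zero[of _ r _ m]) (use Z in auto)
  have P1: "L1 * K = four_block_mat (x \<cdot>\<^sub>m 1\<^sub>m r - Z * transpose_mat Z) (0\<^sub>m r m) (x \<cdot>\<^sub>m transpose_mat Z) (x \<cdot>\<^sub>m 1\<^sub>m m)"
    unfolding L1_def K_def
    apply (subst mult_four_block_mat[OF one_carrier_mat uminus_carrier_mat[OF Z] zero_carrier_mat smult_carrier_mat[OF one_carrier_mat]
       smult_carrier_mat[OF one_carrier_mat] Z ZT one_carrier_mat])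
    using Z ZT apply (auto)
    done
  have P2: "L2 * K = four_block_mat (x \<cdot>\<^sub>m 1\<^sub>m r) Z (0\<^sub>m m r) (x \<cdot>\<^sub>m 1\<^sub>m m - transpose_mat Z * Z)"
    unfolding L2_def K_def
    apply (subst mult_four_block_mat[OF one_carrier_mat zero_carrier_mat uminus_carrier_mat[OF ZT] smult_carrier_mat[OF one_carrier_mat]
       smult_carrier_mat[OF one_carrier_mat] Z ZT one_carrier_mat])
    using Z ZT apply (auto)
    done
  have "Determinant.det (L1 * K) = x ^ m * Determinant.det (x \<cdot>\<^sub>m 1\<^sub>m r - Z * transpose_mat Z)"
    unfolding P1 by (subst det_four_block_mat_upper_right_zero[of _ r _ m]) (use Z in auto)
  hence e1: "x ^ m * Determinant.det K = x ^ m * Determinant.det (x \<cdot>\<^sub>m 1\<^sub>m r - Z * transpose_mat Z)"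
    using det_mult[OF L1 K] dL1 by simp
  have "Determinant.det (L2 * K) = x ^ r * Determinant.det (x \<cdot>\<^sub>m 1\<^sub>m m - transpose_mat Z * Z)"
    unfolding P2 by (subst det_four_block_mat_lower_left_zero[of _ r _ m]) (use Z in auto)
  hence e2: "x ^ m * Determinant.det K = x ^ r * Determinant.det (x \<cdot>\<^sub>m 1\<^sub>m m - transpose_mat Z * Z)"
    using det_mult[OF L2 K] dL2 by simp
  show ?thesis using e1 e2 by simp
qed


lemma char_poly_sylvester:
  fixes Z :: "real mat"
  assumes Z: "Z \<in> carrier_mat r m"
  shows "monom 1 r * char_poly (transpose_mat Z * Z) = monom 1 m * char_poly (Z * transpose_mat Z)"
proof -
  have "poly (monom 1 r * char_poly (transpose_mat Z * Z)) x = poly (monom 1 m * char_poly (Z * transpose_mat Z)) x" for x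
    using sylvester_det[OF Z, of x] Z
    by (simp add: poly_char_poly_eval[of _ m] poly_char_poly_eval[of _ r] poly_monom)
  hence "poly (monom 1 r * char_poly (transpose_mat Z * Z)) = poly (monom 1 m * char_poly (Z * transpose_mat Z))"
    by auto
  thus ?thesis by (simp add: poly_eq_poly_eq_iff)
qed

lemma proots_monom1: "proots (monom (1::real) k) = repeat_mset k {#0#}"
proof -
  have "proots [:0::real, 1:] = {#0#}" using proots_linear_factor[of "0::real"] by simp
  thus ?thesis by (simp add: monom_altdef proots_power)
qed

lemma char_poly_nz: assumes "A \<in> carrier_mat n n" shows "char_poly (A :: real mat) \<noteq> 0"
  using degree_monic_char_poly[OF assms] by auto

lemma spectral:
  fixes Z Y :: "real mat"
  assumes Z: "Z \<in> carrier_mat r m" and r1: "1 \<le> r" and sp: "0 < \<sigma>"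
    and YZ: "transpose_mat Y * Y = transpose_mat Z * Z"
    and ks: "\<sigma> \<le> kth_singular_value Y r"
    and q: "q \<in> carrier_vec r"
  shows "\<sigma>\<^sup>2 * (q \<bullet> q) \<le> (transpose_mat Z *\<^sub>v q) \<bullet> (transpose_mat Z *\<^sub>v q)"
proof (rule ccontr)
  assume "\<not> ?thesis"
  hence lt: "(transpose_mat Z *\<^sub>v q) \<bullet> (transpose_mat Z *\<^sub>v q) < \<sigma>\<^sup>2 * (q \<bullet> q)" by simp
  define S where "S = Z * transpose_mat Z"
  define M where "M = transpose_mat Z * Z"
  have S: "S \<in> carrier_mat r r" unfolding S_def using Z by auto
  have M: "M \<in> carrier_mat m m" unfolding M_def using Z by auto
  have Ssym: "transpose_mat S = S" unfolding S_def using Z by (simp add: transpose_mult[of _ r m])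
  have ZTq: "transpose_mat Z *\<^sub>v q \<in> carrier_vec m" using Z q by auto
  have "q \<bullet> (S *\<^sub>v q) = (transpose_mat Z *\<^sub>v q) \<bullet> (transpose_mat Z *\<^sub>v q)"
  proof -
    have "S *\<^sub>v q = Z *\<^sub>v (transpose_mat Z *\<^sub>v q)" unfolding S_def using Z q by auto
    thus ?thesis using transpose_vec_mult_scalar[OF Z ZTq q] by simp
  qed
  with lt have "q \<bullet> (S *\<^sub>v q) < \<sigma>\<^sup>2 * (q \<bullet> q)" by simp
  from sym_root_below[OF S Ssym q this] obtain t where t: "t < \<sigma>\<^sup>2" "poly (char_poly S) t = 0" by auto
  define P where "P = (\<lambda>x::real. \<sigma>\<^sup>2 \<le> x)"
  have cS: "char_poly S \<noteq> 0" using char_poly_nz[OF S] .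
  have cM: "char_poly M \<noteq> 0" using char_poly_nz[OF M] .
  have syl: "monom 1 r * char_poly M = monom 1 m * char_poly S"
    unfolding M_def S_def by (rule char_poly_sylvester[OF Z])
  have "proots (monom 1 r * char_poly M) = repeat_mset r {#0#} + proots (char_poly M)"
    using cM by (simp add: proots_mult proots_monom1 monom_eq_0_iff)
  moreover have "proots (monom 1 m * char_poly S) = repeat_mset m {#0#} + proots (char_poly S)"
    using cS by (simp add: proots_mult proots_monom1 monom_eq_0_iff)
  ultimately have "repeat_mset r {#0#} + proots (char_poly M) = repeat_mset m {#0#} + proots (char_poly S)"
    using syl by simp
  hence "filter_mset P (repeat_mset r {#0#} + proots (char_poly M)) = filter_mset P (repeat_mset m {#0#} + proots (char_poly S))"
    by simp
  moreover have z0: "\<not> P 0" using sp unfolding P_def by simp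
  have fz: "filter_mset P (replicate_mset k 0) = {#}" for k
    using z0 by (induct k) auto
  ultimately have FMS: "filter_mset P (proots (char_poly M)) = filter_mset P (proots (char_poly S))"
    by (simp add: fz)
  have "size (proots (char_poly S)) \<le> r"
    using size_proots_le[of "char_poly S"] degree_monic_char_poly[OF S] by simp
  moreover have "t \<in># filter_mset (\<lambda>x. \<not> P x) (proots (char_poly S))"
    using t cS unfolding P_def by simp
  hence "1 \<le> size (filter_mset (\<lambda>x. \<not> P x) (proots (char_poly S)))"
    by (metis One_nat_def Suc_leI nonempty_has_size size_eq_0_iff_empty empty_iff set_mset_empty)
  moreover have "size (proots (char_poly S)) = size (filter_mset P (proots (char_poly S))) + size (filter_mset (\<lambda>x. \<not> P x) (proots (char_poly S)))"
    by (metis multiset_partition size_union)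
  ultimately have "size (filter_mset P (proots (char_poly S))) < r" by linarith
  hence small: "size (filter_mset P (proots (char_poly M))) < r" using FMS by simp
  define R where "R = proots (char_poly M)"
  have AbsR: "Abs_multiset (\<lambda>x. order x (char_poly M)) = R"
  proof -
    have "(\<lambda>x. order x (char_poly M)) = count R" unfolding R_def using cM by (auto simp: fun_eq_iff)
    thus ?thesis by (simp add: count_inverse)
  qed
  define sl where "sl = sorted_list_of_multiset R"
  define L where "L = rev sl"
  have Leq: "eigenvalues_desc (transpose_mat Y * Y) = L"
    unfolding eigenvalues_desc_def YZ M_def[symmetric] AbsR L_def sl_def ..
  have "0 < kth_singular_value Y r" using ks sp by linarith
  hence rL: "r \<le> length L" and sq: "\<sigma> \<le> sqrt (L ! (r - 1))"
    using ks r1 unfolding kth_singular_value_def Leq Let_def by (auto split: if_splits)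
  have Lr: "\<sigma>\<^sup>2 \<le> L ! (r - 1)"
  proof -
    have a0: "0 < L ! (r - 1)" using sq sp by (metis order_less_le_trans real_sqrt_gt_0_iff)
    have "\<sigma>\<^sup>2 \<le> (sqrt (L ! (r - 1)))\<^sup>2" by (rule power_mono[OF sq]) (use sp in linarith)
    thus ?thesis using a0 by simp
  qed
  have srt: "sorted sl" unfolding sl_def by simp
  have PL: "P (L ! j)" if j: "j < r" for j
  proof -
    have lsl: "length L = length sl" unfolding L_def by simp
    have "L ! j = sl ! (length sl - Suc j)" unfolding L_def using j rL lsl by (simp add: rev_nth)
    moreover have "L ! (r - 1) = sl ! (length sl - Suc (r - 1))" unfolding L_def using r1 rL lsl by (simp add: rev_nth)
    moreover have "sl ! (length sl - Suc (r - 1)) \<le> sl ! (length sl - Suc j)"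
      by (rule sorted_nth_mono[OF srt]) (use j rL lsl r1 in auto)
    ultimately show ?thesis using Lr unfolding P_def by simp
  qed
  have "r \<le> length (filter P L)"
  proof -
    have "{0..<r} \<subseteq> {i. i < length L \<and> P (L ! i)}" using PL rL by auto
    hence "card {0..<r} \<le> card {i. i < length L \<and> P (L ! i)}" by (intro card_mono) auto
    thus ?thesis by (simp add: length_filter_conv_card)
  qed
  also have "length (filter P L) = size (filter_mset P R)"
    by (metis L_def sl_def mset_filter mset_rev mset_sorted_list_of_multiset size_mset)
  finally show False using small unfolding R_def by linarith
qed



lemma sq_add: fixes a b :: "real vec" assumes "a \<in> carrier_vec n" "b \<in> carrier_vec n"
  shows "(a + b) \<bullet> (a + b) = a \<bullet> a + 2 * (a \<bullet> b) + b \<bullet> b"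
  using assms by (simp add: add_scalar_prod_distrib[of _ n] scalar_prod_add_distrib[of _ n] comm_scalar_prod[of b n a])

lemma sq_minus: fixes a b :: "real vec" assumes "a \<in> carrier_vec n" "b \<in> carrier_vec n"
  shows "(a - b) \<bullet> (a - b) = a \<bullet> a - 2 * (a \<bullet> b) + b \<bullet> b"
  using assms by (simp add: minus_scalar_prod_distrib[of _ n] scalar_prod_minus_distrib[of _ n] comm_scalar_prod[of b n a])

lemma two_dot_le: fixes a b :: "real vec" assumes "a \<in> carrier_vec n" "b \<in> carrier_vec n"
  shows "2 * (a \<bullet> b) \<le> a \<bullet> a + b \<bullet> b"
  using sq_minus[OF assms] sqnorm_nonneg[of "a - b"] by linarith

lemma sq_add_le: fixes a b :: "real vec" assumes "a \<in> carrier_vec n" "b \<in> carrier_vec n"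
  shows "(a + b) \<bullet> (a + b) \<le> 2 * (a \<bullet> a) + 2 * (b \<bullet> b)"
  using sq_add[OF assms] two_dot_le[OF assms] by linarith

lemma sq_minus_le: fixes a b :: "real vec" assumes "a \<in> carrier_vec n" "b \<in> carrier_vec n"
  shows "(a - b) \<bullet> (a - b) \<le> 2 * (a \<bullet> a) + 2 * (b \<bullet> b)"
  using sq_minus[OF assms] two_dot_le[OF assms] sqnorm_nonneg[of "a+b"] sq_add[OF assms] by linarith

context
  fixes U :: "real mat" and d k :: nat
  assumes U: "U \<in> carrier_mat d k" and UtU: "transpose_mat U * U = 1\<^sub>m k"
begin

lemma UtUv: "v \<in> carrier_vec k \<Longrightarrow> transpose_mat U *\<^sub>v (U *\<^sub>v v) = v"
  using U UtU by (metis assoc_mult_mat_vec one_mult_mat_vec transpose_carrier_mat)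

lemma Uv_dot: "v \<in> carrier_vec k \<Longrightarrow> w \<in> carrier_vec d \<Longrightarrow> (U *\<^sub>v v) \<bullet> w = v \<bullet> (transpose_mat U *\<^sub>v w)"
  using transpose_vec_mult_scalar[of "transpose_mat U" k d w v] U by simp

lemma Uv_Uv: "v \<in> carrier_vec k \<Longrightarrow> w \<in> carrier_vec k \<Longrightarrow> (U *\<^sub>v v) \<bullet> (U *\<^sub>v w) = v \<bullet> w"
  using Uv_dot[of v "U *\<^sub>v w"] UtUv[of w] U by simp

definition pa :: "real vec \<Rightarrow> real vec" where "pa x = x - U *\<^sub>v (transpose_mat U *\<^sub>v x)"

lemma pa_carrier[simp]: "x \<in> carrier_vec d \<Longrightarrow> pa x \<in> carrier_vec d"
  unfolding pa_def using U by auto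

lemma pa_dot_right: assumes x: "x \<in> carrier_vec d" and y: "y \<in> carrier_vec d"
  shows "pa x \<bullet> y = x \<bullet> y - (transpose_mat U *\<^sub>v x) \<bullet> (transpose_mat U *\<^sub>v y)"
proof -
  have ux: "transpose_mat U *\<^sub>v x \<in> carrier_vec k" using U x by auto
  have "pa x \<bullet> y = x \<bullet> y - (U *\<^sub>v (transpose_mat U *\<^sub>v x)) \<bullet> y"
    unfolding pa_def using x y U by (simp add: minus_scalar_prod_distrib[of _ d])
  thus ?thesis using Uv_dot[OF ux y] by simp
qed

lemma pa_dot: assumes x: "x \<in> carrier_vec d" and y: "y \<in> carrier_vec d"
  shows "pa x \<bullet> pa y = pa x \<bullet> y"
proof -
  have ux: "transpose_mat U *\<^sub>v x \<in> carrier_vec k" and uy: "transpose_mat U *\<^sub>v y \<in> carrier_vec k" using U x y by auto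
  have Uy: "U *\<^sub>v (transpose_mat U *\<^sub>v y) \<in> carrier_vec d" using U y by auto
  have "pa x \<bullet> pa y = pa x \<bullet> y - pa x \<bullet> (U *\<^sub>v (transpose_mat U *\<^sub>v y))"
    unfolding pa_def[of y] using x y U by (simp add: scalar_prod_minus_distrib[of _ d])
  also have "pa x \<bullet> (U *\<^sub>v (transpose_mat U *\<^sub>v y)) = 0"
  proof -
    have "x \<bullet> (U *\<^sub>v (transpose_mat U *\<^sub>v y)) = (U *\<^sub>v (transpose_mat U *\<^sub>v y)) \<bullet> x"
      using x Uy by (simp add: comm_scalar_prod[of _ d])
    also have "\<dots> = (transpose_mat U *\<^sub>v y) \<bullet> (transpose_mat U *\<^sub>v x)" using Uv_dot[OF uy x] .
    also have "\<dots> = (transpose_mat U *\<^sub>v x) \<bullet> (transpose_mat U *\<^sub>v y)" using ux uy by (simp add: comm_scalar_prod[of _ k])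
    finally show ?thesis using pa_dot_right[OF x Uy] UtUv[OF uy] by simp
  qed
  finally show ?thesis by simp
qed

lemma pa_sq: assumes x: "x \<in> carrier_vec d"
  shows "pa x \<bullet> pa x = x \<bullet> x - (transpose_mat U *\<^sub>v x) \<bullet> (transpose_mat U *\<^sub>v x)"
  using pa_dot[OF x x] pa_dot_right[OF x x] by simp

lemma pa_sq_le: "x \<in> carrier_vec d \<Longrightarrow> pa x \<bullet> pa x \<le> x \<bullet> x"
  using pa_sq sqnorm_nonneg by fastforce

lemma Ut_sq_le: "x \<in> carrier_vec d \<Longrightarrow> (transpose_mat U *\<^sub>v x) \<bullet> (transpose_mat U *\<^sub>v x) \<le> x \<bullet> x"
  using pa_sq sqnorm_nonneg[of "pa x"] by fastforce

lemma proj_sq_le: "x \<in> carrier_vec d \<Longrightarrow> (U *\<^sub>v (transpose_mat U *\<^sub>v x)) \<bullet> (U *\<^sub>v (transpose_mat U *\<^sub>v x)) \<le> x \<bullet> x"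
  using Ut_sq_le Uv_Uv[of "transpose_mat U *\<^sub>v x" "transpose_mat U *\<^sub>v x"] U by auto

lemma pa_minus: assumes x: "x \<in> carrier_vec d" and y: "y \<in> carrier_vec d"
  shows "pa (x - y) = pa x - pa y"
  unfolding pa_def using x y U
  by (intro eq_vecI) (auto simp: mult_minus_distrib_mat_vec[of _ k d] mult_minus_distrib_mat_vec[of _ d k] scalar_prod_minus_distrib[of _ d])

lemma pa_add: assumes x: "x \<in> carrier_vec d" and y: "y \<in> carrier_vec d"
  shows "pa (x + y) = pa x + pa y"
  unfolding pa_def using x y U
  by (intro eq_vecI) (auto simp: mult_add_distrib_mat_vec[of _ k d] mult_add_distrib_mat_vec[of _ d k] scalar_prod_add_distrib[of _ d])

end



lemma vmean_carrier[simp]: "vmean d T E \<in> carrier_vec d"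
  unfolding vmean_def by simp

lemma dot_vmean:
  fixes v :: "real vec"
  assumes v: "v \<in> carrier_vec d" and E: "\<And>i. i \<in> T \<Longrightarrow> E i \<in> carrier_vec d"
  shows "v \<bullet> vmean d T E = (\<Sum>i\<in>T. v \<bullet> E i) / real (card T)"
proof -
  have "v \<bullet> vmean d T E = (\<Sum>j<d. v $ j * ((\<Sum>i\<in>T. E i $ j) / real (card T)))"
    unfolding vmean_def using v by (simp add: scalar_prod_def lessThan_atLeast0)
  also have "\<dots> = (\<Sum>j<d. \<Sum>i\<in>T. v $ j * E i $ j) / real (card T)"
    by (simp add: sum_divide_distrib sum_distrib_left)
  also have "\<dots> = (\<Sum>i\<in>T. \<Sum>j<d. v $ j * E i $ j) / real (card T)"
    by (subst sum.swap) simp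
  also have "\<dots> = (\<Sum>i\<in>T. v \<bullet> E i) / real (card T)"
  proof -
    have "(\<Sum>j<d. v $ j * E i $ j) = v \<bullet> E i" if "i \<in> T" for i
      using E[OF that] by (auto simp: scalar_prod_def lessThan_atLeast0)
    thus ?thesis by simp
  qed
  finally show ?thesis .
qed

lemma vmean_cong: "(\<And>i. i \<in> T \<Longrightarrow> E i = F i) \<Longrightarrow> vmean d T E = vmean d T F"
  unfolding vmean_def by (auto intro!: arg_cong[where f="Matrix.vec d"] ext sum.cong)

lemma vmean_affine:
  fixes Us :: "real mat"
  assumes Us: "Us \<in> carrier_mat d r" and ms: "ms \<in> carrier_vec d"
    and lam: "\<And>i. i \<in> T \<Longrightarrow> lam i \<in> carrier_vec r"
    and T: "finite T" "T \<noteq> {}"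
  shows "vmean d T (\<lambda>i. Us *\<^sub>v lam i + ms) = Us *\<^sub>v vmean r T lam + ms"
proof (rule eq_vecI)
  show "dim_vec (vmean d T (\<lambda>i. Us *\<^sub>v lam i + ms)) = dim_vec (Us *\<^sub>v vmean r T lam + ms)"
    using Us ms by simp
  fix j assume j: "j < dim_vec (Us *\<^sub>v vmean r T lam + ms)"
  hence j: "j < d" using ms by simp
  have c: "real (card T) \<noteq> 0" using T by simp
  have rj: "row Us j \<in> carrier_vec r" using Us j by auto
  have "vmean d T (\<lambda>i. Us *\<^sub>v lam i + ms) $ j = (\<Sum>i\<in>T. row Us j \<bullet> lam i + ms $ j) / real (card T)"
    unfolding vmean_def using j Us ms by simp
  also have "\<dots> = (\<Sum>i\<in>T. row Us j \<bullet> lam i) / real (card T) + ms $ j"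
    using c by (simp add: sum.distrib add_divide_distrib)
  also have "\<dots> = row Us j \<bullet> vmean r T lam + ms $ j"
    using dot_vmean[OF rj lam] by simp
  also have "\<dots> = (Us *\<^sub>v vmean r T lam + ms) $ j" using j Us ms by simp
  finally show "vmean d T (\<lambda>i. Us *\<^sub>v lam i + ms) $ j = (Us *\<^sub>v vmean r T lam + ms) $ j" .
qed

lemma vec_id1: fixes a b c :: "'a :: ab_group_add vec"
  assumes "a \<in> carrier_vec n" "b \<in> carrier_vec n" "c \<in> carrier_vec n"
  shows "(a - c) - (b - c) = a - b" "(a - c) + (b - a) = b - c" "a - (a - b) = b"
    "(a - b) - (c - b) = a - c"
  using assms by (auto intro!: eq_vecI)

lemma vec_id2: fixes a b c :: "'a :: ab_group_add vec"
  assumes "a \<in> carrier_vec n" "b \<in> carrier_vec n" "c \<in> carrier_vec n"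
  shows "(a + c) - (b + c) = a - b" "(a - b) - c = (a - b) + (- c)"
  using assms by (auto intro!: eq_vecI)



lemma geo:
  fixes U Us :: "real mat" and m0 ms :: "real vec" and Eg lam :: "nat \<Rightarrow> real vec"
  assumes U: "U \<in> carrier_mat d k" and UtU: "transpose_mat U * U = 1\<^sub>m k"
    and m0: "m0 \<in> carrier_vec d"
    and Us: "Us \<in> carrier_mat d r" and UsU: "transpose_mat Us * Us = 1\<^sub>m r"
    and ms: "ms \<in> carrier_vec d"
    and T: "finite T" "card T = mm" "1 \<le> mm"
    and lamc: "\<And>i. i \<in> insert h T \<Longrightarrow> lam i \<in> carrier_vec r"
    and Egl: "\<And>i. i \<in> insert h T \<Longrightarrow> Eg i = Us *\<^sub>v lam i + ms"
    and spec: "\<And>q. q \<in> carrier_vec r \<Longrightarrow> \<sigma>\<^sup>2 * (q \<bullet> q) \<le> (\<Sum>i\<in>T. ((lam i - vmean r T lam) \<bullet> q)\<^sup>2)"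
    and wb: "(Eg h - vmean d T Eg) \<bullet> (Eg h - vmean d T Eg) \<le> 4 * \<delta>\<^sup>2"
    and sp: "0 < \<sigma>"
  shows "pa U (Eg h - m0) \<bullet> pa U (Eg h - m0)
     \<le> (1 / real mm + 4 * \<delta>\<^sup>2 / \<sigma>\<^sup>2) * (\<Sum>i\<in>T. pa U (Eg i - m0) \<bullet> pa U (Eg i - m0))"
proof -
  note pa_lemmas = pa_carrier[OF U UtU] pa_dot[OF U UtU] pa_dot_right[OF U UtU] pa_minus[OF U UtU] pa_add[OF U UtU]
  have Tne: "T \<noteq> {}" using T by auto
  have Egc: "Eg i \<in> carrier_vec d" if "i \<in> insert h T" for i using Egl[OF that] lamc[OF that] Us ms by auto
  define \<mu> where "\<mu> = vmean d T Eg"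
  define lb where "lb = vmean r T lam"
  have \<mu>c: "\<mu> \<in> carrier_vec d" unfolding \<mu>_def by simp
  have lbc: "lb \<in> carrier_vec r" unfolding lb_def by simp
  have \<mu>eq: "\<mu> = Us *\<^sub>v lb + ms"
  proof -
    have "\<mu> = vmean d T (\<lambda>i. Us *\<^sub>v lam i + ms)" unfolding \<mu>_def by (rule vmean_cong) (use Egl in auto)
    also have "\<dots> = Us *\<^sub>v lb + ms" unfolding lb_def by (rule vmean_affine[OF Us ms _ T(1) Tne]) (use lamc in auto)
    finally show ?thesis .
  qed
  define \<alpha> where "\<alpha> i = lam i - lb" for i
  have \<alpha>c: "\<alpha> i \<in> carrier_vec r" if "i \<in> insert h T" for i unfolding \<alpha>_def using lamc[OF that] lbc by auto
  have yeq: "Eg i - \<mu> = Us *\<^sub>v \<alpha> i" if i: "i \<in> insert h T" for i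
  proof -
    have "Eg i - \<mu> = (Us *\<^sub>v lam i + ms) - (Us *\<^sub>v lb + ms)" using Egl[OF i] \<mu>eq by simp
    also have "\<dots> = Us *\<^sub>v lam i - Us *\<^sub>v lb" using lamc[OF i] lbc Us ms by (intro vec_id2(1)[of _ d]) auto
    also have "\<dots> = Us *\<^sub>v \<alpha> i" unfolding \<alpha>_def using lamc[OF i] lbc Us by (simp add: mult_minus_distrib_mat_vec)
    finally show ?thesis .
  qed
  define a where "a = pa U (\<mu> - m0)"
  have ac: "a \<in> carrier_vec d" unfolding a_def using \<mu>c m0 pa_lemmas by auto
  define y where "y i = Eg i - \<mu>" for i
  have yc: "y i \<in> carrier_vec d" if "i \<in> insert h T" for i unfolding y_def using Egc[OF that] \<mu>c by auto
  have Dsplit: "pa U (Eg i - m0) = a + pa U (y i)" if i: "i \<in> insert h T" for i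
  proof -
    have "Eg i - m0 = (\<mu> - m0) + y i" unfolding y_def using Egc[OF i] \<mu>c m0 by (intro eq_vecI) auto
    thus ?thesis unfolding a_def using pa_lemmas(5)[of "\<mu> - m0" "y i"] \<mu>c m0 yc[OF i] by auto
  qed
  define X where "X = a \<bullet> a"
  define W where "W = (\<Sum>i\<in>T. pa U (y i) \<bullet> pa U (y i))"
  have W0: "0 \<le> W" unfolding W_def by (intro sum_nonneg) (simp add: sqnorm_nonneg)
  have X0: "0 \<le> X" unfolding X_def by (simp add: sqnorm_nonneg)
  have cross: "(\<Sum>i\<in>T. a \<bullet> pa U (y i)) = 0"
  proof -
    have "a \<bullet> pa U (y i) = a \<bullet> Eg i - a \<bullet> \<mu>" if i: "i \<in> T" for i
    proof -
      have "a \<bullet> pa U (y i) = pa U (\<mu> - m0) \<bullet> y i" unfolding a_def using pa_lemmas(2)[of "\<mu> - m0" "y i"] \<mu>c m0 yc i by auto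
      also have "\<dots> = a \<bullet> Eg i - a \<bullet> \<mu>" unfolding a_def[symmetric] y_def using ac Egc i \<mu>c
        by (simp add: scalar_prod_minus_distrib[of _ d])
      finally show ?thesis .
    qed
    hence "(\<Sum>i\<in>T. a \<bullet> pa U (y i)) = (\<Sum>i\<in>T. a \<bullet> Eg i) - real (card T) * (a \<bullet> \<mu>)"
      by (simp add: sum_subtractf)
    also have "a \<bullet> \<mu> = (\<Sum>i\<in>T. a \<bullet> Eg i) / real (card T)" unfolding \<mu>_def
      by (rule dot_vmean[OF ac]) (use Egc in auto)
    finally show ?thesis using T by simp
  qed
  have sumT: "(\<Sum>i\<in>T. pa U (Eg i - m0) \<bullet> pa U (Eg i - m0)) = real mm * X + W"
  proof -
    have "(\<Sum>i\<in>T. pa U (Eg i - m0) \<bullet> pa U (Eg i - m0)) = (\<Sum>i\<in>T. X + 2 * (a \<bullet> pa U (y i)) + pa U (y i) \<bullet> pa U (y i))"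
    proof (rule sum.cong[OF refl])
      fix i assume i: "i \<in> T"
      have pyc: "pa U (y i) \<in> carrier_vec d" using pa_lemmas(1) yc i by auto
      show "pa U (Eg i - m0) \<bullet> pa U (Eg i - m0) = X + 2 * (a \<bullet> pa U (y i)) + pa U (y i) \<bullet> pa U (y i)"
      proof -
        have "pa U (Eg i - m0) = a + pa U (y i)" using Dsplit i by auto
        thus ?thesis using sq_add[OF ac pyc] X_def by simp
      qed
    qed
    also have "\<dots> = real (card T) * X + 2 * (\<Sum>i\<in>T. a \<bullet> pa U (y i)) + W"
      unfolding W_def by (simp add: sum.distrib sum_distrib_left)
    finally show ?thesis using cross T by simp
  qed
  define w where "w = y h"
  define b where "b = pa U w"
  have wc: "w \<in> carrier_vec d" unfolding w_def using yc by auto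
  have bc: "b \<in> carrier_vec d" unfolding b_def using wc pa_lemmas by auto
  have Dh: "pa U (Eg h - m0) = a + b" unfolding b_def w_def using Dsplit by auto
  define \<beta> where "\<beta> = \<alpha> h"
  have \<beta>c: "\<beta> \<in> carrier_vec r" unfolding \<beta>_def using \<alpha>c by auto
  have w\<beta>: "w = Us *\<^sub>v \<beta>" unfolding w_def y_def \<beta>_def using yeq by auto
  have bb_bw: "b \<bullet> b = b \<bullet> w" unfolding b_def using pa_lemmas(2)[OF wc wc] .
  define qz where "qz = transpose_mat Us *\<^sub>v b"
  have qzc: "qz \<in> carrier_vec r" unfolding qz_def using Us bc by auto
  have bw: "b \<bullet> w = \<beta> \<bullet> qz"
  proof -
    have "b \<bullet> w = w \<bullet> b" using bc wc by (simp add: comm_scalar_prod[of _ d])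
    also have "\<dots> = \<beta> \<bullet> qz" unfolding w\<beta> qz_def using Uv_dot[OF Us UsU \<beta>c bc] .
    finally show ?thesis .
  qed
  have ww: "w \<bullet> w = \<beta> \<bullet> \<beta>" unfolding w\<beta> using Uv_Uv[OF Us UsU \<beta>c \<beta>c] .
  have cs1: "(b \<bullet> b)\<^sup>2 \<le> (qz \<bullet> qz) * (w \<bullet> w)"
    using cauchy_schwarz_vec[OF qzc \<beta>c] bb_bw bw ww by (simp add: mult.commute)
  have trm: "(\<alpha> i \<bullet> qz)\<^sup>2 \<le> (b \<bullet> b) * (pa U (y i) \<bullet> pa U (y i))" if i: "i \<in> T" for i
  proof -
    have iT: "i \<in> insert h T" using i by auto
    have pyc: "pa U (y i) \<in> carrier_vec d" using pa_lemmas(1) yc iT by auto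
    have "\<alpha> i \<bullet> qz = (Us *\<^sub>v \<alpha> i) \<bullet> b" unfolding qz_def using Uv_dot[OF Us UsU \<alpha>c[OF iT] bc] by simp
    also have "\<dots> = y i \<bullet> b" unfolding y_def using yeq[OF iT] by simp
    also have "\<dots> = b \<bullet> y i" using bc yc[OF iT] by (simp add: comm_scalar_prod[of _ d])
    also have "\<dots> = b \<bullet> pa U (y i)" unfolding b_def using pa_lemmas(2)[OF wc yc[OF iT]] by simp
    finally have "\<alpha> i \<bullet> qz = b \<bullet> pa U (y i)" .
    thus ?thesis using cauchy_schwarz_vec[OF pyc bc] by simp
  qed
  have spec_qz: "\<sigma>\<^sup>2 * (qz \<bullet> qz) \<le> (b \<bullet> b) * W"
  proof -
    have "\<sigma>\<^sup>2 * (qz \<bullet> qz) \<le> (\<Sum>i\<in>T. (\<alpha> i \<bullet> qz)\<^sup>2)" using spec[OF qzc] unfolding \<alpha>_def lb_def .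
    also have "\<dots> \<le> (\<Sum>i\<in>T. (b \<bullet> b) * (pa U (y i) \<bullet> pa U (y i)))" by (intro sum_mono trm)
    also have "\<dots> = (b \<bullet> b) * W" unfolding W_def by (simp add: sum_distrib_left)
    finally show ?thesis .
  qed
  have wb': "w \<bullet> w \<le> 4 * \<delta>\<^sup>2" using wb unfolding w_def y_def \<mu>_def .
  define k4 where "k4 = 4 * \<delta>\<^sup>2 / \<sigma>\<^sup>2"
  have k40: "0 \<le> k4" unfolding k4_def by simp
  have bbound: "b \<bullet> b \<le> k4 * W"
  proof (cases "b \<bullet> b = 0")
    case True thus ?thesis using k40 W0 by simp
  next
    case False
    hence bp: "0 < b \<bullet> b" using sqnorm_nonneg[of b] by linarith
    have "\<sigma>\<^sup>2 * (b \<bullet> b)\<^sup>2 \<le> \<sigma>\<^sup>2 * ((qz \<bullet> qz) * (w \<bullet> w))" using cs1 by (simp add: mult_left_mono)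
    also have "\<dots> = (\<sigma>\<^sup>2 * (qz \<bullet> qz)) * (w \<bullet> w)" by simp
    also have "\<dots> \<le> ((b \<bullet> b) * W) * (w \<bullet> w)" using spec_qz sqnorm_nonneg[of w] by (rule mult_right_mono)
    also have "\<dots> \<le> ((b \<bullet> b) * W) * (4 * \<delta>\<^sup>2)" using wb' bp W0 by (intro mult_left_mono) auto
    finally have "\<sigma>\<^sup>2 * (b \<bullet> b) * (b \<bullet> b) \<le> (4 * \<delta>\<^sup>2 * W) * (b \<bullet> b)"
      by (simp add: power2_eq_square mult_ac)
    hence "\<sigma>\<^sup>2 * (b \<bullet> b) \<le> 4 * \<delta>\<^sup>2 * W" using bp by simp
    thus ?thesis unfolding k4_def using sp by (simp add: field_simps)
  qed
  have lhs: "pa U (Eg h - m0) \<bullet> pa U (Eg h - m0) = X + 2 * (a \<bullet> b) + b \<bullet> b"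
    unfolding Dh X_def using sq_add[OF ac bc] .
  have mm0: "0 < real mm" using T by simp
  have cross_b: "2 * (a \<bullet> b) \<le> k4 * real mm * X + W / real mm"
  proof (cases "k4 = 0")
    case True
    hence "b \<bullet> b = 0" using bbound sqnorm_nonneg[of b] by simp
    hence "(a \<bullet> b)\<^sup>2 \<le> 0" using cauchy_schwarz_vec[OF bc ac] by simp
    hence "a \<bullet> b = 0" by simp
    thus ?thesis using W0 mm0 True by simp
  next
    case False
    hence kp: "0 < k4" using k40 by simp
    define t where "t = k4 * real mm"
    have tp: "0 < t" unfolding t_def using kp mm0 by simp
    have "0 \<le> (t \<cdot>\<^sub>v a - b) \<bullet> (t \<cdot>\<^sub>v a - b)" by (rule sqnorm_nonneg)
    also have "\<dots> = t * t * X - 2 * t * (a \<bullet> b) + b \<bullet> b"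
      using sq_minus[of "t \<cdot>\<^sub>v a" d b] ac bc unfolding X_def by (simp add: mult_ac)
    finally have "2 * t * (a \<bullet> b) \<le> t * t * X + b \<bullet> b" by linarith
    hence "2 * (a \<bullet> b) \<le> t * X + (b \<bullet> b) / t" using tp by (simp add: field_simps)
    also have "(b \<bullet> b) / t \<le> (k4 * W) / t" using bbound tp by (simp add: divide_right_mono)
    also have "(k4 * W) / t = W / real mm" unfolding t_def using kp by simp
    finally show ?thesis unfolding t_def by simp
  qed
  have "pa U (Eg h - m0) \<bullet> pa U (Eg h - m0) \<le> X + (k4 * real mm * X + W / real mm) + k4 * W"
    using lhs cross_b bbound by linarith
  also have "\<dots> = (1 / real mm + k4) * (real mm * X + W)" using mm0 by (simp add: field_simps)
  finally show ?thesis unfolding sumT k4_def .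
qed



lemma spec_T:
  fixes Us :: "real mat" and ms :: "real vec" and Eg lam :: "nat \<Rightarrow> real vec"
  assumes Us: "Us \<in> carrier_mat d r" and UsU: "transpose_mat Us * Us = 1\<^sub>m r"
    and ms: "ms \<in> carrier_vec d"
    and T: "finite T" "T \<noteq> {}"
    and lamc: "\<And>i. i \<in> T \<Longrightarrow> lam i \<in> carrier_vec r"
    and Egl: "\<And>i. i \<in> T \<Longrightarrow> Eg i = Us *\<^sub>v lam i + ms"
    and r1: "1 \<le> r" and sp: "0 < \<sigma>"
    and ks: "\<sigma> \<le> kth_singular_value (centered_matrix d T Eg) r"
    and q: "q \<in> carrier_vec r"
  shows "\<sigma>\<^sup>2 * (q \<bullet> q) \<le> (\<Sum>i\<in>T. ((lam i - vmean r T lam) \<bullet> q)\<^sup>2)"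
proof -
  define \<mu> where "\<mu> = vmean d T Eg"
  define lb where "lb = vmean r T lam"
  have lbc: "lb \<in> carrier_vec r" unfolding lb_def by simp
  have \<mu>eq: "\<mu> = Us *\<^sub>v lb + ms"
  proof -
    have "\<mu> = vmean d T (\<lambda>i. Us *\<^sub>v lam i + ms)" unfolding \<mu>_def by (rule vmean_cong) (use Egl in auto)
    also have "\<dots> = Us *\<^sub>v lb + ms" unfolding lb_def by (rule vmean_affine[OF Us ms _ T]) (use lamc in auto)
    finally show ?thesis .
  qed
  define \<alpha> where "\<alpha> i = lam i - lb" for i
  have \<alpha>c: "\<alpha> i \<in> carrier_vec r" if "i \<in> T" for i unfolding \<alpha>_def using lamc[OF that] lbc by auto
  have yeq: "Eg i - \<mu> = Us *\<^sub>v \<alpha> i" if i: "i \<in> T" for i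
  proof -
    have "Eg i - \<mu> = (Us *\<^sub>v lam i + ms) - (Us *\<^sub>v lb + ms)" using Egl[OF i] \<mu>eq by simp
    also have "\<dots> = Us *\<^sub>v lam i - Us *\<^sub>v lb" using lamc[OF i] lbc Us ms by (intro vec_id2(1)[of _ d]) auto
    also have "\<dots> = Us *\<^sub>v \<alpha> i" unfolding \<alpha>_def using lamc[OF i] lbc Us by (simp add: mult_minus_distrib_mat_vec)
    finally show ?thesis .
  qed
  define sl where "sl = sorted_list_of_set T"
  define mm where "mm = length sl"
  have slT: "set sl = T" "distinct sl" unfolding sl_def using T by auto
  have slin: "sl ! j \<in> T" if "j < mm" for j using that slT unfolding mm_def by auto
  define Z where "Z = mat_of_cols r (map \<alpha> sl)"
  have Z: "Z \<in> carrier_mat r mm" unfolding Z_def mm_def by (metis length_map mat_of_cols_carrier(1))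
  define Y where "Y = centered_matrix d T Eg"
  have Yeq: "Y = Us * Z"
  proof (rule eq_matI)
    show "dim_row Y = dim_row (Us * Z)" "dim_col Y = dim_col (Us * Z)"
      unfolding Y_def centered_matrix_def sl_def[symmetric] using Us Z unfolding mm_def by auto
    fix i j assume i: "i < dim_row (Us * Z)" and j: "j < dim_col (Us * Z)"
    hence i: "i < d" and j: "j < mm" using Us Z by auto
    have "Y $$ (i,j) = (Eg (sl ! j) - \<mu>) $ i"
      unfolding Y_def centered_matrix_def sl_def[symmetric] \<mu>_def[symmetric]
      using i j unfolding mm_def by (simp add: mat_of_cols_index)
    also have "\<dots> = (Us *\<^sub>v \<alpha> (sl ! j)) $ i" using yeq[OF slin[OF j]] by simp
    also have "\<dots> = row Us i \<bullet> \<alpha> (sl ! j)" using i Us by simp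
    also have "\<dots> = (Us * Z) $$ (i,j)"
      using i j Us Z \<alpha>c[OF slin[OF j]] unfolding Z_def mm_def by simp
    finally show "Y $$ (i,j) = (Us * Z) $$ (i,j)" .
  qed
  have YZ: "transpose_mat Y * Y = transpose_mat Z * Z"
  proof -
    have "transpose_mat Y * Y = (transpose_mat Z * transpose_mat Us) * (Us * Z)"
      unfolding Yeq using transpose_mult[OF Us Z] by simp
    also have "\<dots> = transpose_mat Z * (transpose_mat Us * (Us * Z))"
      by (rule assoc_mult_mat[of _ mm r _ d _ mm]) (use Us Z in auto)
    also have "transpose_mat Us * (Us * Z) = (transpose_mat Us * Us) * Z"
      by (rule assoc_mult_mat[symmetric, of _ r d _ r _ mm]) (use Us Z in auto)
    also have "\<dots> = Z" using UsU Z by simp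
    finally show ?thesis .
  qed
  have "\<sigma>\<^sup>2 * (q \<bullet> q) \<le> (transpose_mat Z *\<^sub>v q) \<bullet> (transpose_mat Z *\<^sub>v q)"
    by (rule spectral[OF Z r1 sp YZ _ q]) (use ks in \<open>simp add: Y_def\<close>)
  also have "\<dots> = (\<Sum>j=0..<mm. (\<alpha> (sl ! j) \<bullet> q)\<^sup>2)"
  proof -
    have "(transpose_mat Z *\<^sub>v q) $ j = \<alpha> (sl ! j) \<bullet> q" if j: "j < mm" for j
      using j Z \<alpha>c[OF slin[OF j]] unfolding Z_def mm_def by simp
    thus ?thesis using Z by (simp add: scalar_prod_def power2_eq_square)
  qed
  also have "\<dots> = (\<Sum>i\<in>T. (\<alpha> i \<bullet> q)\<^sup>2)"
  proof -
    have "(\<Sum>j=0..<mm. (\<alpha> (sl ! j) \<bullet> q)\<^sup>2) = sum_list (map (\<lambda>i. (\<alpha> i \<bullet> q)\<^sup>2) sl)"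
      unfolding mm_def by (simp add: sum_list_sum_nth)
    also have "\<dots> = (\<Sum>i\<in>set sl. (\<alpha> i \<bullet> q)\<^sup>2)" using slT by (simp add: sum_list_distinct_conv_sum_set)
    finally show ?thesis using slT by simp
  qed
  finally show ?thesis unfolding \<alpha>_def lb_def .
qed

lemma wbound:
  fixes Eg :: "nat \<Rightarrow> real vec"
  assumes TH: "T \<subseteq> H" and T: "finite T" "T \<noteq> {}"
    and Egc: "\<forall>i\<in>H. Eg i \<in> carrier_vec d"
    and out: "\<forall>i\<in>H. sqrt (sqnorm (Eg i - vmean d H Eg)) \<le> \<delta>"
    and h: "h \<in> H"
  shows "(Eg h - vmean d T Eg) \<bullet> (Eg h - vmean d T Eg) \<le> 4 * \<delta>\<^sup>2"
proof -
  define \<mu>H where "\<mu>H = vmean d H Eg"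
  define \<mu> where "\<mu> = vmean d T Eg"
  have c: "\<mu>H \<in> carrier_vec d" "\<mu> \<in> carrier_vec d" unfolding \<mu>H_def \<mu>_def by auto
  have eb: "(Eg i - \<mu>H) \<bullet> (Eg i - \<mu>H) \<le> \<delta>\<^sup>2" if i: "i \<in> H" for i
  proof -
    have s: "sqrt ((Eg i - \<mu>H) \<bullet> (Eg i - \<mu>H)) \<le> \<delta>" using out i unfolding \<mu>H_def sqnorm_def by auto
    have "(Eg i - \<mu>H) \<bullet> (Eg i - \<mu>H) = (sqrt ((Eg i - \<mu>H) \<bullet> (Eg i - \<mu>H)))\<^sup>2" using sqnorm_nonneg[of "Eg i - \<mu>H"] by simp
    also have "\<dots> \<le> \<delta>\<^sup>2" by (rule power_mono[OF s]) (rule real_sqrt_ge_zero, rule sqnorm_nonneg)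
    finally show ?thesis .
  qed
  define v where "v = \<mu> - \<mu>H"
  have vc: "v \<in> carrier_vec d" unfolding v_def using c by auto
  have EgT: "Eg i \<in> carrier_vec d" if "i \<in> T" for i using Egc TH that by auto
  have mmp: "0 < real (card T)" using T by (simp add: card_gt_0_iff)
  have vmu: "v \<bullet> \<mu> = (\<Sum>i\<in>T. v \<bullet> Eg i) / real (card T)" unfolding \<mu>_def by (rule dot_vmean[OF vc EgT])
  have "(\<Sum>i\<in>T. v \<bullet> (Eg i - \<mu>H)) = (\<Sum>i\<in>T. v \<bullet> Eg i - v \<bullet> \<mu>H)"
    by (rule sum.cong) (use vc EgT c in \<open>auto simp: scalar_prod_minus_distrib[of _ d]\<close>)
  also have "\<dots> = real (card T) * (v \<bullet> \<mu>) - real (card T) * (v \<bullet> \<mu>H)"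
    using vmu mmp by (simp add: sum_subtractf)
  also have "\<dots> = real (card T) * (v \<bullet> v)"
    unfolding v_def using c by (simp add: scalar_prod_minus_distrib[of _ d] right_diff_distrib)
  finally have sv: "(\<Sum>i\<in>T. v \<bullet> (Eg i - \<mu>H)) = real (card T) * (v \<bullet> v)" .
  have "2 * (v \<bullet> (Eg i - \<mu>H)) \<le> v \<bullet> v + \<delta>\<^sup>2" if i: "i \<in> T" for i
    using two_dot_le[OF vc, of "Eg i - \<mu>H"] eb[of i] EgT[OF i] c TH i by auto
  hence "(\<Sum>i\<in>T. 2 * (v \<bullet> (Eg i - \<mu>H))) \<le> (\<Sum>i\<in>T. v \<bullet> v + \<delta>\<^sup>2)"
    by (intro sum_mono) auto
  hence "2 * (\<Sum>i\<in>T. v \<bullet> (Eg i - \<mu>H)) \<le> (\<Sum>i\<in>T. v \<bullet> v + \<delta>\<^sup>2)"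
    by (simp add: sum_distrib_left)
  also have "(\<Sum>i\<in>T. v \<bullet> v + \<delta>\<^sup>2) = real (card T) * (v \<bullet> v) + real (card T) * \<delta>\<^sup>2"
    by (simp add: distrib_left)
  finally have "2 * (real (card T) * (v \<bullet> v)) \<le> real (card T) * (v \<bullet> v) + real (card T) * \<delta>\<^sup>2"
    unfolding sv .
  hence "real (card T) * (v \<bullet> v) \<le> real (card T) * \<delta>\<^sup>2" by linarith
  hence vv: "v \<bullet> v \<le> \<delta>\<^sup>2" using mmp by simp
  have hc: "Eg h \<in> carrier_vec d" using Egc h by auto
  have "Eg h - \<mu> = (Eg h - \<mu>H) - v" unfolding v_def using hc c by (intro vec_id1(1)[symmetric, of _ d]) auto
  hence "(Eg h - \<mu>) \<bullet> (Eg h - \<mu>) \<le> 2 * ((Eg h - \<mu>H) \<bullet> (Eg h - \<mu>H)) + 2 * (v \<bullet> v)"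
    using sq_minus_le[of "Eg h - \<mu>H" d v] hc c vc by auto
  also have "\<dots> \<le> 4 * \<delta>\<^sup>2" using eb[OF h] vv by simp
  finally show ?thesis unfolding \<mu>_def .
qed



lemma part1:
  fixes n f c d :: nat and H B :: "nat set" and Eg g :: "nat \<Rightarrow> real vec" and \<delta> \<sigma> :: real
    and k :: nat and U :: "real mat" and m0 :: "real vec" and h :: nat
  assumes c2: "c \<ge> 2" and n2f: "n - 2 * f \<ge> 1"
    and part: "H \<union> B = {1..n}" "H \<inter> B = {}" and cardB: "card B \<le> f"
    and Eg_dim: "\<forall>i\<in>H. Eg i \<in> carrier_vec d"
    and g_dim: "\<forall>i\<in>{1..n}. g i \<in> carrier_vec d"
    and A_sub: "\<exists>U m. orthonormal_cols d (c - 1) U \<and> m \<in> carrier_vec d \<and>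
                       (\<forall>i\<in>H. Eg i \<in> aff_set U m)"
    and A_outer: "\<forall>i\<in>H. sqrt (sqnorm (Eg i - vmean d H Eg)) \<le> \<delta>"
    and \<sigma>_pos: "\<sigma> > 0"
    and A_sing: "\<forall>S. S \<subseteq> H \<and> card S = n - 2 * f \<longrightarrow>
                   kth_singular_value (centered_matrix d S Eg) (c - 1) \<ge> \<sigma>"
    and Uo: "orthonormal_cols d k U" and m0: "m0 \<in> carrier_vec d" and h: "h \<in> H"
  shows "sqnorm (proj_aff U m0 (g h) - Eg h)
          \<le> 2 * sqnorm (g h - Eg h)
            + 4 * (1 / real (n - 2 * f) + 4 * \<delta>\<^sup>2 / \<sigma>\<^sup>2)
                * (trimmed_loss n f g U m0 + (\<Sum>i\<in>H. sqnorm (g i - Eg i)))"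
proof -
  define r where "r = c - 1"
  have r1: "1 \<le> r" unfolding r_def using c2 by simp
  from A_sub obtain Us ms where Uso: "orthonormal_cols d r Us" and ms: "ms \<in> carrier_vec d"
    and EgA: "\<forall>i\<in>H. Eg i \<in> aff_set Us ms" unfolding r_def by blast
  have Us: "Us \<in> carrier_mat d r" and UsU: "transpose_mat Us * Us = 1\<^sub>m r"
    using Uso unfolding orthonormal_cols_def by auto
  have "\<forall>i\<in>H. \<exists>l. l \<in> carrier_vec r \<and> Eg i = Us *\<^sub>v l + ms"
    using EgA Us unfolding aff_set_def by auto
  then obtain lam where lam: "\<forall>i\<in>H. lam i \<in> carrier_vec r \<and> Eg i = Us *\<^sub>v lam i + ms"
    by metis
  have Uc: "U \<in> carrier_mat d k" and UtU: "transpose_mat U * U = 1\<^sub>m k"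
    using Uo unfolding orthonormal_cols_def by auto
  note pa_lemmas = pa_carrier[OF Uc UtU] pa_dot[OF Uc UtU] pa_dot_right[OF Uc UtU] pa_minus[OF Uc UtU] pa_add[OF Uc UtU]
  have Hsub: "H \<subseteq> {1..n}" and Bsub: "B \<subseteq> {1..n}" using part by auto
  have Hfin: "finite H" and Bfin: "finite B" using Hsub Bsub finite_subset by auto
  have gc: "g i \<in> carrier_vec d" if "i \<in> {1..n}" for i using g_dim that by auto
  define Fam where "Fam = {S. S \<subseteq> {1..n} \<and> card S = n - f}"
  define val where "val S = (\<Sum>i\<in>S. sqnorm (g i - proj_aff U m0 (g i)))" for S
  have tlv: "trimmed_loss n f g U m0 = Min (val ` Fam)"
  proof -
    have "{(\<Sum>i\<in>S. sqnorm (g i - proj_aff U m0 (g i))) | S. S \<subseteq> {1..n} \<and> card S = n - f} = val ` Fam"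
      unfolding val_def Fam_def by auto
    thus ?thesis unfolding trimmed_loss_def by simp
  qed
  have Famfin: "finite Fam" unfolding Fam_def by (rule finite_subset[of _ "Pow {1..n}"]) auto
  have "n - f \<le> card {1..n}" by simp
  then obtain S1 where "S1 \<subseteq> {1..n}" "card S1 = n - f" by (rule obtain_subset_with_card_n)
  hence Famne: "Fam \<noteq> {}" unfolding Fam_def by auto
  have "Min (val ` Fam) \<in> val ` Fam" using Famfin Famne by simp
  then obtain S0 where S0: "S0 \<in> Fam" and tl: "trimmed_loss n f g U m0 = val S0" using tlv by auto
  have S0sub: "S0 \<subseteq> {1..n}" and cS0: "card S0 = n - f" using S0 unfolding Fam_def by auto
  have S0fin: "finite S0" using S0sub finite_subset by auto
  have "card S0 \<le> card (S0 \<inter> H) + card (S0 \<inter> B)"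
  proof -
    have "S0 = (S0 \<inter> H) \<union> (S0 \<inter> B)" using S0sub part by auto
    hence "card S0 = card ((S0 \<inter> H) \<union> (S0 \<inter> B))" by simp
    also have "\<dots> \<le> card (S0 \<inter> H) + card (S0 \<inter> B)" by (rule card_Un_le)
    finally show ?thesis .
  qed
  moreover have "card (S0 \<inter> B) \<le> card B" using Bfin by (intro card_mono) auto
  ultimately have "n - 2 * f \<le> card (S0 \<inter> H)" using cS0 cardB by linarith
  then obtain T where TS: "T \<subseteq> S0 \<inter> H" and cT: "card T = n - 2 * f" and Tfin: "finite T"
    by (rule obtain_subset_with_card_n)
  have Tne: "T \<noteq> {}" using cT n2f by auto
  have TH: "T \<subseteq> H" and TS0: "T \<subseteq> S0" using TS by auto
  have lamc: "lam i \<in> carrier_vec r" and Egl: "Eg i = Us *\<^sub>v lam i + ms" if "i \<in> insert h T" for i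
    using lam that TH h by auto
  have ks: "\<sigma> \<le> kth_singular_value (centered_matrix d T Eg) r"
    using A_sing TH cT unfolding r_def by auto
  have spec: "\<sigma>\<^sup>2 * (q \<bullet> q) \<le> (\<Sum>i\<in>T. ((lam i - vmean r T lam) \<bullet> q)\<^sup>2)" if q: "q \<in> carrier_vec r" for q
    by (rule spec_T[OF Us UsU ms Tfin Tne _ _ r1 \<sigma>_pos ks q]) (use lamc Egl in auto)
  have wb: "(Eg h - vmean d T Eg) \<bullet> (Eg h - vmean d T Eg) \<le> 4 * \<delta>\<^sup>2"
    by (rule wbound[OF TH Tfin Tne Eg_dim _ h]) (use A_outer in simp)
  have geo': "pa U (Eg h - m0) \<bullet> pa U (Eg h - m0)
     \<le> (1 / real (n - 2 * f) + 4 * \<delta>\<^sup>2 / \<sigma>\<^sup>2) * (\<Sum>i\<in>T. pa U (Eg i - m0) \<bullet> pa U (Eg i - m0))"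
    by (rule geo[OF Uc UtU m0 Us UsU ms Tfin cT n2f lamc Egl spec wb \<sigma>_pos])
  define C where "C = 1 / real (n - 2 * f) + 4 * \<delta>\<^sup>2 / \<sigma>\<^sup>2"
  have C0: "0 \<le> C" unfolding C_def by simp
  have proj_eq: "proj_aff U m0 x = x - pa U (x - m0)" if x: "x \<in> carrier_vec d" for x
    unfolding proj_aff_def pa_def[OF Uc UtU] using x m0 Uc by (intro eq_vecI) auto
  have resid: "x - proj_aff U m0 x = pa U (x - m0)" if x: "x \<in> carrier_vec d" for x
    unfolding proj_eq[OF x] using x m0 pa_lemmas(1)[of "x - m0"] by (intro vec_id1(3)[of _ d]) auto
  have diff: "pa U (x - y) = pa U (x - m0) - pa U (y - m0)" if x: "x \<in> carrier_vec d" and y: "y \<in> carrier_vec d" for x y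
  proof -
    have "x - y = (x - m0) - (y - m0)" using x y m0 by (intro vec_id1(1)[symmetric, of _ d]) auto
    thus ?thesis using pa_lemmas(4)[of "x - m0" "y - m0"] x y m0 by auto
  qed
  have Ehc: "Eg i \<in> carrier_vec d" if "i \<in> H" for i using Eg_dim that by auto
  have gHc: "g i \<in> carrier_vec d" if "i \<in> H" for i using gc Hsub that by auto
  define v where "v = g h - Eg h"
  have vc: "v \<in> carrier_vec d" unfolding v_def using gHc[OF h] Ehc[OF h] by auto
  have Pvc: "U *\<^sub>v (transpose_mat U *\<^sub>v v) \<in> carrier_vec d" using Uc vc by auto
  have DEhc: "pa U (Eg h - m0) \<in> carrier_vec d" using pa_lemmas(1) Ehc[OF h] m0 by auto
  have lhs_eq: "proj_aff U m0 (g h) - Eg h = U *\<^sub>v (transpose_mat U *\<^sub>v v) - pa U (Eg h - m0)"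
  proof -
    have pv: "pa U v = pa U (g h - m0) - pa U (Eg h - m0)" unfolding v_def by (rule diff[OF gHc[OF h] Ehc[OF h]])
    have "U *\<^sub>v (transpose_mat U *\<^sub>v v) = v - pa U v" unfolding pa_def[OF Uc UtU] using vc Pvc by (intro vec_id1(3)[symmetric, of _ d]) auto
    also have "\<dots> = v - (pa U (g h - m0) - pa U (Eg h - m0))" using pv by simp
    finally have e: "U *\<^sub>v (transpose_mat U *\<^sub>v v) = v - (pa U (g h - m0) - pa U (Eg h - m0))" .
    show ?thesis unfolding e unfolding proj_eq[OF gHc[OF h]] v_def
      using gHc[OF h] Ehc[OF h] m0 pa_lemmas(1)[of "g h - m0"] pa_lemmas(1)[of "Eg h - m0"]
      by (intro eq_vecI) auto
  qed
  have lhs: "sqnorm (proj_aff U m0 (g h) - Eg h) \<le> 2 * sqnorm (g h - Eg h) + 2 * (pa U (Eg h - m0) \<bullet> pa U (Eg h - m0))"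
  proof -
    have "sqnorm (proj_aff U m0 (g h) - Eg h) \<le> 2 * ((U *\<^sub>v (transpose_mat U *\<^sub>v v)) \<bullet> (U *\<^sub>v (transpose_mat U *\<^sub>v v))) + 2 * (pa U (Eg h - m0) \<bullet> pa U (Eg h - m0))"
      unfolding sqnorm_def lhs_eq by (rule sq_minus_le[OF Pvc DEhc])
    also have "(U *\<^sub>v (transpose_mat U *\<^sub>v v)) \<bullet> (U *\<^sub>v (transpose_mat U *\<^sub>v v)) \<le> v \<bullet> v"
      by (rule proj_sq_le[OF Uc UtU vc])
    finally show ?thesis unfolding sqnorm_def v_def by simp
  qed
  have per: "pa U (Eg i - m0) \<bullet> pa U (Eg i - m0) \<le> 2 * (pa U (g i - m0) \<bullet> pa U (g i - m0)) + 2 * sqnorm (g i - Eg i)"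
    if i: "i \<in> H" for i
  proof -
    have gi: "g i \<in> carrier_vec d" and ei: "Eg i \<in> carrier_vec d" using gHc Ehc i by auto
    have c1: "pa U (g i - m0) \<in> carrier_vec d" and c2: "pa U (g i - Eg i) \<in> carrier_vec d"
      and c3: "pa U (Eg i - m0) \<in> carrier_vec d" using pa_lemmas(1) gi ei m0 by auto
    have "pa U (Eg i - m0) = pa U (g i - m0) - pa U (g i - Eg i)"
      unfolding diff[OF gi ei] using c1 c3 by (intro vec_id1(3)[symmetric, of _ d]) auto
    hence "pa U (Eg i - m0) \<bullet> pa U (Eg i - m0) \<le> 2 * (pa U (g i - m0) \<bullet> pa U (g i - m0)) + 2 * (pa U (g i - Eg i) \<bullet> pa U (g i - Eg i))"
      using sq_minus_le[OF c1 c2] by simp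
    also have "pa U (g i - Eg i) \<bullet> pa U (g i - Eg i) \<le> sqnorm (g i - Eg i)"
      unfolding sqnorm_def by (rule pa_sq_le[OF Uc UtU]) (use gi ei in auto)
    finally show ?thesis by simp
  qed
  have sumT: "(\<Sum>i\<in>T. pa U (Eg i - m0) \<bullet> pa U (Eg i - m0))
      \<le> 2 * trimmed_loss n f g U m0 + 2 * (\<Sum>i\<in>H. sqnorm (g i - Eg i))"
  proof -
    have "(\<Sum>i\<in>T. pa U (Eg i - m0) \<bullet> pa U (Eg i - m0))
        \<le> (\<Sum>i\<in>T. 2 * (pa U (g i - m0) \<bullet> pa U (g i - m0)) + 2 * sqnorm (g i - Eg i))"
      by (intro sum_mono per) (use TH in auto)
    also have "\<dots> = 2 * (\<Sum>i\<in>T. pa U (g i - m0) \<bullet> pa U (g i - m0)) + 2 * (\<Sum>i\<in>T. sqnorm (g i - Eg i))"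
      by (simp add: sum.distrib sum_distrib_left)
    also have "(\<Sum>i\<in>T. pa U (g i - m0) \<bullet> pa U (g i - m0)) \<le> (\<Sum>i\<in>S0. pa U (g i - m0) \<bullet> pa U (g i - m0))"
      by (rule sum_mono2[OF S0fin TS0]) (simp add: sqnorm_nonneg)
    also have "(\<Sum>i\<in>S0. pa U (g i - m0) \<bullet> pa U (g i - m0)) = trimmed_loss n f g U m0"
      unfolding tl val_def sqnorm_def
      by (rule sum.cong[OF refl]) (use resid gc S0sub in auto)
    also have "(\<Sum>i\<in>T. sqnorm (g i - Eg i)) \<le> (\<Sum>i\<in>H. sqnorm (g i - Eg i))"
      by (rule sum_mono2[OF Hfin TH]) (simp add: sqnorm_def sqnorm_nonneg)
    finally show ?thesis by simp
  qed
  have "sqnorm (proj_aff U m0 (g h) - Eg h) \<le> 2 * sqnorm (g h - Eg h) + 2 * (C * (\<Sum>i\<in>T. pa U (Eg i - m0) \<bullet> pa U (Eg i - m0)))"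
    using lhs geo' unfolding C_def by linarith
  also have "\<dots> \<le> 2 * sqnorm (g h - Eg h) + 2 * (C * (2 * trimmed_loss n f g U m0 + 2 * (\<Sum>i\<in>H. sqnorm (g i - Eg i))))"
    using sumT C0 by (simp add: mult_left_mono)
  also have "\<dots> = 2 * sqnorm (g h - Eg h) + 4 * C * (trimmed_loss n f g U m0 + (\<Sum>i\<in>H. sqnorm (g i - Eg i)))"
    by (simp add: algebra_simps)
  finally show ?thesis unfolding C_def .
qed



theorem mainTheorem8:
  fixes n f c d :: nat
    and H B :: "nat set"
    and Eg :: "nat \<Rightarrow> real vec"
    and g :: "nat \<Rightarrow> real vec"
    and \<delta> \<sigma> :: real
  assumes c2: "c \<ge> 2" and dc: "d \<ge> c" and f_pos: "f \<ge> 1" and n2f: "n - 2 * f \<ge> 1"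
    and part: "H \<union> B = {1..n}" "H \<inter> B = {}" and cardB: "card B \<le> f"
    and Eg_dim: "\<forall>i\<in>H. Eg i \<in> carrier_vec d"
    and g_dim: "\<forall>i\<in>{1..n}. g i \<in> carrier_vec d"
    and A_sub: "\<exists>U m. orthonormal_cols d (c - 1) U \<and> m \<in> carrier_vec d \<and>
                       (\<forall>i\<in>H. Eg i \<in> aff_set U m)"
    and A_outer: "\<forall>i\<in>H. sqrt (sqnorm (Eg i - vmean d H Eg)) \<le> \<delta>"
    and \<sigma>_pos: "\<sigma> > 0"
    and A_sing: "\<forall>S. S \<subseteq> H \<and> card S = n - 2 * f \<longrightarrow>
                   kth_singular_value (centered_matrix d S Eg) (c - 1) \<ge> \<sigma>"
  shows
    "(\<forall>k U m h. orthonormal_cols d k U \<and> m \<in> carrier_vec d \<and> h \<in> H \<longrightarrow>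
        sqnorm (proj_aff U m (g h) - Eg h)
          \<le> 2 * sqnorm (g h - Eg h)
            + 4 * (1 / real (n - 2 * f) + 4 * \<delta>\<^sup>2 / \<sigma>\<^sup>2)
                * (trimmed_loss n f g U m + (\<Sum>i\<in>H. sqnorm (g i - Eg i))))
     \<and>
     (\<forall>(M :: 'w measure) G Pk PU Pm \<epsilon> h.
        prob_space M
        \<and> (\<forall>\<omega>\<in>space M. (\<forall>i\<in>{1..n}. G \<omega> i \<in> carrier_vec d)
                       \<and> orthonormal_cols d (Pk \<omega>) (PU \<omega>) \<and> Pm \<omega> \<in> carrier_vec d)
        \<and> (\<forall>i\<in>H. \<forall>j<d. integrable M (\<lambda>\<omega>. G \<omega> i $ j)
                         \<and> Eg i $ j = integral\<^sup>L M (\<lambda>\<omega>. G \<omega> i $ j))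
        \<and> (\<forall>i\<in>H. integrable M (\<lambda>\<omega>. sqnorm (G \<omega> i - Eg i))
                  \<and> integral\<^sup>L M (\<lambda>\<omega>. sqnorm (G \<omega> i - Eg i)) \<le> \<epsilon>\<^sup>2)
        \<and> integrable M (\<lambda>\<omega>. trimmed_loss n f (G \<omega>) (PU \<omega>) (Pm \<omega>))
        \<and> (\<lambda>\<omega>. sqnorm (proj_aff (PU \<omega>) (Pm \<omega>) (G \<omega> h) - Eg h)) \<in> borel_measurable M
        \<and> h \<in> H
        \<longrightarrow>
        integral\<^sup>L M (\<lambda>\<omega>. sqnorm (proj_aff (PU \<omega>) (Pm \<omega>) (G \<omega> h) - Eg h))
          \<le> 2 * \<epsilon>\<^sup>2
            + 4 * (1 / real (n - 2 * f) + 4 * \<delta>\<^sup>2 / \<sigma>\<^sup>2)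
                * (integral\<^sup>L M (\<lambda>\<omega>. trimmed_loss n f (G \<omega>) (PU \<omega>) (Pm \<omega>))
                   + real (card H) * \<epsilon>\<^sup>2))"
proof (intro conjI allI impI)
  fix k :: nat and U :: "real mat" and m :: "real vec" and h :: nat
  assume a: "orthonormal_cols d k U \<and> m \<in> carrier_vec d \<and> h \<in> H"
  show "sqnorm (proj_aff U m (g h) - Eg h)
          \<le> 2 * sqnorm (g h - Eg h)
            + 4 * (1 / real (n - 2 * f) + 4 * \<delta>\<^sup>2 / \<sigma>\<^sup>2)
                * (trimmed_loss n f g U m + (\<Sum>i\<in>H. sqnorm (g i - Eg i)))"
    by (rule part1[OF c2 n2f part cardB Eg_dim g_dim A_sub A_outer \<sigma>_pos A_sing]) (use a in auto)
next
  fix M :: "'w measure" and G :: "'w \<Rightarrow> nat \<Rightarrow> real vec" and Pk :: "'w \<Rightarrow> nat"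
    and PU :: "'w \<Rightarrow> real mat" and Pm :: "'w \<Rightarrow> real vec" and \<epsilon> :: real and h :: nat
  assume a: "prob_space M
        \<and> (\<forall>\<omega>\<in>space M. (\<forall>i\<in>{1..n}. G \<omega> i \<in> carrier_vec d)
                       \<and> orthonormal_cols d (Pk \<omega>) (PU \<omega>) \<and> Pm \<omega> \<in> carrier_vec d)
        \<and> (\<forall>i\<in>H. \<forall>j<d. integrable M (\<lambda>\<omega>. G \<omega> i $ j)
                         \<and> Eg i $ j = integral\<^sup>L M (\<lambda>\<omega>. G \<omega> i $ j))
        \<and> (\<forall>i\<in>H. integrable M (\<lambda>\<omega>. sqnorm (G \<omega> i - Eg i))
                  \<and> integral\<^sup>L M (\<lambda>\<omega>. sqnorm (G \<omega> i - Eg i)) \<le> \<epsilon>\<^sup>2)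
        \<and> integrable M (\<lambda>\<omega>. trimmed_loss n f (G \<omega>) (PU \<omega>) (Pm \<omega>))
        \<and> (\<lambda>\<omega>. sqnorm (proj_aff (PU \<omega>) (Pm \<omega>) (G \<omega> h) - Eg h)) \<in> borel_measurable M
        \<and> h \<in> H"
  define C where "C = 1 / real (n - 2 * f) + 4 * \<delta>\<^sup>2 / \<sigma>\<^sup>2"
  have C0: "0 \<le> C" unfolding C_def by simp
  have h: "h \<in> H" using a by blast
  define F where "F \<omega> = sqnorm (proj_aff (PU \<omega>) (Pm \<omega>) (G \<omega> h) - Eg h)" for \<omega>
  define Rt where "Rt \<omega> = 2 * sqnorm (G \<omega> h - Eg h) + 4 * C * (trimmed_loss n f (G \<omega>) (PU \<omega>) (Pm \<omega>) + (\<Sum>i\<in>H. sqnorm (G \<omega> i - Eg i)))" for \<omega>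
  have FR: "F \<omega> \<le> Rt \<omega>" if w: "\<omega> \<in> space M" for \<omega>
  proof -
    have "\<forall>i\<in>{1..n}. G \<omega> i \<in> carrier_vec d" "orthonormal_cols d (Pk \<omega>) (PU \<omega>)" "Pm \<omega> \<in> carrier_vec d"
      using a w by auto
    from part1[OF c2 n2f part cardB Eg_dim this(1) A_sub A_outer \<sigma>_pos A_sing this(2) this(3) h]
    show ?thesis unfolding F_def Rt_def C_def by simp
  qed
  have F0: "0 \<le> F \<omega>" for \<omega> unfolding F_def sqnorm_def by (rule sqnorm_nonneg)
  have intH: "integrable M (\<lambda>\<omega>. sqnorm (G \<omega> i - Eg i))" and bdH: "integral\<^sup>L M (\<lambda>\<omega>. sqnorm (G \<omega> i - Eg i)) \<le> \<epsilon>\<^sup>2"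
    if "i \<in> H" for i using a that by auto
  have intT: "integrable M (\<lambda>\<omega>. trimmed_loss n f (G \<omega>) (PU \<omega>) (Pm \<omega>))" using a by blast
  have intS: "integrable M (\<lambda>\<omega>. \<Sum>i\<in>H. sqnorm (G \<omega> i - Eg i))"
    using intH by (intro Bochner_Integration.integrable_sum) auto
  have intR: "integrable M Rt" unfolding Rt_def
    using intH[OF h] intT intS by auto
  have measF: "F \<in> borel_measurable M" unfolding F_def using a by blast
  have intF: "integrable M F"
  proof (rule Bochner_Integration.integrable_bound[OF intR measF])
    show "AE x in M. norm (F x) \<le> norm (Rt x)"
      using FR F0 by (intro AE_I2) (smt (verit) real_norm_def)
  qed
  have "integral\<^sup>L M F \<le> integral\<^sup>L M Rt" by (rule Bochner_Integration.integral_mono[OF intF intR FR])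
  also have "integral\<^sup>L M Rt = 2 * integral\<^sup>L M (\<lambda>\<omega>. sqnorm (G \<omega> h - Eg h))
      + 4 * C * (integral\<^sup>L M (\<lambda>\<omega>. trimmed_loss n f (G \<omega>) (PU \<omega>) (Pm \<omega>)) + (\<Sum>i\<in>H. integral\<^sup>L M (\<lambda>\<omega>. sqnorm (G \<omega> i - Eg i))))"
    unfolding Rt_def using intH[OF h] intT intS intH
    by (simp add: integral_sum)
  also have "\<dots> \<le> 2 * \<epsilon>\<^sup>2 + 4 * C * (integral\<^sup>L M (\<lambda>\<omega>. trimmed_loss n f (G \<omega>) (PU \<omega>) (Pm \<omega>)) + real (card H) * \<epsilon>\<^sup>2)"
  proof -
    have "(\<Sum>i\<in>H. integral\<^sup>L M (\<lambda>\<omega>. sqnorm (G \<omega> i - Eg i))) \<le> (\<Sum>i\<in>H. \<epsilon>\<^sup>2)"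
      by (rule sum_mono) (rule bdH)
    hence "(\<Sum>i\<in>H. integral\<^sup>L M (\<lambda>\<omega>. sqnorm (G \<omega> i - Eg i))) \<le> real (card H) * \<epsilon>\<^sup>2" by simp
    thus ?thesis using bdH[OF h] C0 by (smt (verit) mult_left_mono)
  qed
  finally show "integral\<^sup>L M (\<lambda>\<omega>. sqnorm (proj_aff (PU \<omega>) (Pm \<omega>) (G \<omega> h) - Eg h))
          \<le> 2 * \<epsilon>\<^sup>2
            + 4 * (1 / real (n - 2 * f) + 4 * \<delta>\<^sup>2 / \<sigma>\<^sup>2)
                * (integral\<^sup>L M (\<lambda>\<omega>. trimmed_loss n f (G \<omega>) (PU \<omega>) (Pm \<omega>))
                   + real (card H) * \<epsilon>\<^sup>2)" unfolding F_def C_def .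
qed



end
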